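(* For $c\in\mathbb{R}$, $\Omega_0^M\cap\kappa^{-1}(c)\neq\varnothing$ if and only if $c<-14$.
   Context: $\kappa(x,y,z)=-x^2-y^2+z^2+xyz-2$ on $\mathbb{R}^3$, and $\Omega_0^M=\{(x,y,z)\in\mathbb{R}^3: z<-2,\ xy+z>2\}$ (equivalently $z<-2$ and $\bar z<-2$ where $\bar z=-xy-z$). *)

theory Defs
  imports Complex_Main
begin

definition kappa :: "real \<Rightarrow> real \<Rightarrow> real \<Rightarrow> real" where
  "kappa x y z = - (x^2) - y^2 + z^2 + x*y*z - 2"

definition Omega0M :: "(real \<times> real \<times> real) set" where
  "Omega0M = {(x, y, z). z < -2 \<and> x*y + z > 2}"

end

theory Submission
  imports Defs
begin

theorem mainTheorem3:
  fixes c :: real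
  shows "Omega0M \<inter> {(x, y, z). kappa x y z = c} \<noteq> {} \<longleftrightarrow> c < -14"
proof
  assume "Omega0M \<inter> {(x, y, z). kappa x y z = c} \<noteq> {}"
  then obtain x y z where h: "z < -2" "x*y + z > 2" "kappa x y z = c"
    unfolding Omega0M_def by auto
  define w where "w = -x*y - z"
  have w: "w < -2" using h unfolding w_def by simp
  have k: "c = -(x^2) - y^2 - z*w - 2" using h(3) unfolding kappa_def w_def
    by (simp add: algebra_simps power2_eq_square)
  have zw: "z*w > 4"
  proof -
    have "(-z)*(-w) > 2*2" using h(1) w by (intro mult_strict_mono) auto
    then show ?thesis by simp
  qed
  have "x*y > 4" using h w unfolding w_def by simp
  moreover have "x^2 + y^2 \<ge> 2*x*y" using sum_squares_ge_zero[of "x-y" 0]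
    by (simp add: power2_eq_square algebra_simps)
  ultimately show "c < -14" using k zw by linarith
next
  assume c: "c < -14"
  define r where "r = sqrt (2 - c)"
  have r: "r > 4"
  proof -
    have "sqrt 16 < sqrt (2 - c)" using c by (subst real_sqrt_less_iff) simp
    moreover have "sqrt (16::real) = 4" by (simp add: real_sqrt_unique)
    ultimately show ?thesis unfolding r_def by simp
  qed
  have r2: "r^2 = 2 - c" unfolding r_def using c by simp
  define s where "s = 2*r - 4"
  have s: "s > 4" using r unfolding s_def by simp
  define t where "t = sqrt s"
  have tt: "t*t = s" unfolding t_def using s by simp
  have "(t, t, -s/2) \<in> Omega0M" unfolding Omega0M_def using s tt by auto
  moreover have "kappa t t (-s/2) = c" unfolding kappa_def
  proof -
    have "- t\<^sup>2 - t\<^sup>2 + (- s / 2)\<^sup>2 + t * t * (- s / 2) - 2 = -2*s - s^2/4 - 2"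
      using tt by (simp add: power2_eq_square field_simps)
    also have "\<dots> = 2 - r^2" unfolding s_def by (simp add: power2_eq_square field_simps)
    finally show "- t\<^sup>2 - t\<^sup>2 + (- s / 2)\<^sup>2 + t * t * (- s / 2) - 2 = c" using r2 by simp
  qed
  ultimately show "Omega0M \<inter> {(x, y, z). kappa x y z = c} \<noteq> {}" by blast
qed

end
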